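(* Let $(G,v)$ and $(G',v')$ be valued abelian groups and $f:G\to G'$ a map with $f0=0$. If $f$ is immediate, then for every $a'\in G'\setminus\{0\}$ there is $a\in G$ such that (IH1) $v'(a'-fa)>v'a'$, and (IH2) for all $b\in G$, $va\le vb$ implies $v'fa\le v'fb$. Conversely, if $f$ is a group homomorphism and for every $a'\in G'\setminus\{0\}$ there is $a\in G$ satisfying (IH1) and (IH2), then $f$ is immediate.
   Context: A valued abelian group $(G,v)$ is an abelian group with a map $v$ from $G$ onto $vG\cup\{\infty\}$, $vG$ totally ordered and $\infty$ larger than all its elements, such that $va=\infty$ iff $a=0$ and $v(a-b)\ge\min\{va,vb\}$. It is regarded as an ultrametric space with $u(a,b)=v(a-b)$. For a map $f:Y\to Y'$ of ultrametric spaces, with closed balls $B(x,y)=\{z:u(x,z)\ge u(x,y)\}$, an element $z'\in Y'$ is an attractor for $f$ if for every $y\in Y$ with $z'\neq fy$ there is $z\in Y$ with $u'(fz,z')>u'(fy,z')$ and $f(B(y,z))\subseteq B(fy,z')$; $f$ is immediate if every $z'\in Y'$ is an attractor for $f$. *)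

theory Defs
  imports Main
begin

text \<open>A valued abelian group: the group is a type of class ab_group_add, the valuation
  takes values in a linear order whose top element plays the role of infinity;
  the value set vG is the image of the nonzero elements.\<close>

definition valued_group :: "('a::ab_group_add \<Rightarrow> 'b::{linorder,order_top}) \<Rightarrow> bool" where
  "valued_group v \<longleftrightarrow> (\<forall>a. v a = top \<longleftrightarrow> a = 0) \<and> (\<forall>a b. min (v a) (v b) \<le> v (a - b))"

definition vdist :: "('a::ab_group_add \<Rightarrow> 'b) \<Rightarrow> 'a \<Rightarrow> 'a \<Rightarrow> 'b" where
  "vdist v a b = v (a - b)"

definition uball :: "('a \<Rightarrow> 'a \<Rightarrow> 'b::linorder) \<Rightarrow> 'a \<Rightarrow> 'a \<Rightarrow> 'a set" where
  "uball u x y = {z. u x y \<le> u x z}"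

definition attractor ::
  "('a \<Rightarrow> 'a \<Rightarrow> 'b::linorder) \<Rightarrow> ('c \<Rightarrow> 'c \<Rightarrow> 'd::linorder) \<Rightarrow> ('a \<Rightarrow> 'c) \<Rightarrow> 'c \<Rightarrow> bool" where
  "attractor u u' f z' \<longleftrightarrow>
     (\<forall>y. z' \<noteq> f y \<longrightarrow>
        (\<exists>z. u' (f y) z' < u' (f z) z' \<and> f ` uball u y z \<subseteq> uball u' (f y) z'))"

definition immediate ::
  "('a \<Rightarrow> 'a \<Rightarrow> 'b::linorder) \<Rightarrow> ('c \<Rightarrow> 'c \<Rightarrow> 'd::linorder) \<Rightarrow> ('a \<Rightarrow> 'c) \<Rightarrow> bool" where
  "immediate u u' f \<longleftrightarrow> (\<forall>z'. attractor u u' f z')"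

end

theory Submission
  imports Defs
begin

lemma vg_neg:
  assumes "valued_group v" shows "v (- x) = v x"
proof -
  have A: "\<And>x. v x \<le> v (- x)"
  proof -
    fix x
    have "min (v 0) (v x) \<le> v (0 - x)" using assms unfolding valued_group_def by blast
    moreover have "v 0 = top" using assms unfolding valued_group_def by blast
    ultimately show "v x \<le> v (- x)" by simp
  qed
  show ?thesis using A[of x] A[of "-x"] by simp
qed

lemma vg_sym:
  assumes "valued_group v" shows "v (a - b) = v (b - a)"
  using vg_neg[OF assms, of "a - b"] by simp

lemma vg_add:
  assumes "valued_group v" shows "min (v a) (v b) \<le> v (a + b)"
proof -
  have "min (v a) (v (- b)) \<le> v (a - - b)" using assms unfolding valued_group_def by blast
  thus ?thesis using vg_neg[OF assms] by simp
qed

lemma vg_key: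
  assumes "valued_group v" and "v (a - c) > v a" shows "v c = v a"
proof -
  have "min (v a) (v (a - c)) \<le> v (a - (a - c))" using assms(1) unfolding valued_group_def by blast
  hence 1: "v a \<le> v c" using assms(2) by simp
  have "min (v c) (v (a - c)) \<le> v (c + (a - c))" using vg_add[OF assms(1)] by blast
  hence "min (v c) (v (a - c)) \<le> v a" by simp
  thus ?thesis using 1 assms(2) by (auto simp: min_def split: if_splits)
qed

theorem proposition11:
  fixes v :: "'a::ab_group_add \<Rightarrow> 'b::{linorder,order_top}"
    and v' :: "'c::ab_group_add \<Rightarrow> 'd::{linorder,order_top}"
    and f :: "'a \<Rightarrow> 'c"
  assumes "valued_group v" and "valued_group v'" and "f 0 = 0"
  shows "(immediate (vdist v) (vdist v') f \<longrightarrow>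
            (\<forall>a'. a' \<noteq> 0 \<longrightarrow> (\<exists>a. v' (a' - f a) > v' a' \<and>
                 (\<forall>b. v a \<le> v b \<longrightarrow> v' (f a) \<le> v' (f b)))))
       \<and> (((\<forall>x y. f (x + y) = f x + f y) \<and>
            (\<forall>a'. a' \<noteq> 0 \<longrightarrow> (\<exists>a. v' (a' - f a) > v' a' \<and>
                 (\<forall>b. v a \<le> v b \<longrightarrow> v' (f a) \<le> v' (f b)))))
           \<longrightarrow> immediate (vdist v) (vdist v') f)"
proof (intro conjI impI allI)
  fix a' :: 'c
  assume im: "immediate (vdist v) (vdist v') f" and a0: "a' \<noteq> 0"
  have "attractor (vdist v) (vdist v') f a'" using im unfolding immediate_def by blast
  moreover have "a' \<noteq> f 0" using a0 assms(3) by simp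
  ultimately obtain z where z1: "v' (f 0 - a') < v' (f z - a')"
    and z2: "f ` uball (vdist v) 0 z \<subseteq> uball (vdist v') (f 0) a'"
    unfolding attractor_def vdist_def by blast
  have c1: "v' (a' - f z) > v' a'"
    using z1 assms(3) vg_neg[OF assms(2), of a'] vg_sym[OF assms(2), of a' "f z"] by simp
  have c2: "v' (f z) = v' a'" using vg_key[OF assms(2) c1] .
  show "\<exists>a. v' (a' - f a) > v' a' \<and> (\<forall>b. v a \<le> v b \<longrightarrow> v' (f a) \<le> v' (f b))"
  proof (intro exI conjI allI impI)
    show "v' (a' - f z) > v' a'" by (rule c1)
    fix b assume "v z \<le> v b"
    hence "b \<in> uball (vdist v) 0 z" unfolding uball_def vdist_def
      using vg_neg[OF assms(1)] by simp
    hence "f b \<in> uball (vdist v') (f 0) a'" using z2 by blast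
    hence "v' a' \<le> v' (f b)" unfolding uball_def vdist_def
      using vg_neg[OF assms(2)] assms(3) by simp
    thus "v' (f z) \<le> v' (f b)" using c2 by simp
  qed
next
  assume H: "(\<forall>x y. f (x + y) = f x + f y) \<and>
            (\<forall>a'. a' \<noteq> 0 \<longrightarrow> (\<exists>a. v' (a' - f a) > v' a' \<and>
                 (\<forall>b. v a \<le> v b \<longrightarrow> v' (f a) \<le> v' (f b))))"
  have add: "\<And>x y. f (x + y) = f x + f y" using H by blast
  have neg: "\<And>x. f (- x) = - f x"
  proof -
    fix x have "f (x + - x) = f x + f (- x)" by (rule add)
    thus "f (- x) = - f x" using assms(3) by (simp add: eq_neg_iff_add_eq_0 add.commute)
  qed
  have sub: "\<And>x y. f (x - y) = f x - f y"
    using add neg by (metis diff_conv_add_uminus)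
  show "immediate (vdist v) (vdist v') f"
    unfolding immediate_def attractor_def
  proof (intro allI impI)
    fix z' y assume ne: "z' \<noteq> f y"
    define a' where "a' = z' - f y"
    have "a' \<noteq> 0" using ne a'_def by simp
    then obtain a where a1: "v' (a' - f a) > v' a'"
      and a2: "\<forall>b. v a \<le> v b \<longrightarrow> v' (f a) \<le> v' (f b)" using H by blast
    have fa: "v' (f a) = v' a'" using vg_key[OF assms(2) a1] .
    show "\<exists>z. vdist v' (f y) z' < vdist v' (f z) z' \<and>
            f ` uball (vdist v) y z \<subseteq> uball (vdist v') (f y) z'"
    proof (intro exI conjI)
      have "f (y + a) - z' = - (a' - f a)" using add a'_def by (simp add: algebra_simps)
      moreover have "f y - z' = - a'" using a'_def by simp
      ultimately show "vdist v' (f y) z' < vdist v' (f (y + a)) z'"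
        unfolding vdist_def using a1 vg_neg[OF assms(2)] vg_sym[OF assms(2), of "f a" a'] by simp
      show "f ` uball (vdist v) y (y + a) \<subseteq> uball (vdist v') (f y) z'"
      proof
        fix t assume "t \<in> f ` uball (vdist v) y (y + a)"
        then obtain w where t: "t = f w" and "v (y - (y + a)) \<le> v (y - w)"
          unfolding uball_def vdist_def by blast
        hence "v a \<le> v (y - w)" using vg_neg[OF assms(1), of a] by simp
        hence "v' (f a) \<le> v' (f (y - w))" using a2 by blast
        hence "v' a' \<le> v' (f y - f w)" using fa sub by simp
        moreover have "v' (f y - z') = v' a'" using a'_def vg_neg[OF assms(2), of a'] by simp
        ultimately show "t \<in> uball (vdist v') (f y) z'"
          unfolding uball_def vdist_def t by simp
      qed
    qed
  qed
qed

end
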